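(* Let $q\in L_2(0,\pi)$ be real valued, $h,H\in\mathbb R$, $\omega=\frac12\int_0^\pi q(t)\,dt$, and suppose $0$ is an eigenvalue of the problem $-y''+q(x)y=\rho^2y$ on $(0,\pi)$, $y'(0)-hy(0)=0$, $y'(\pi)+Hy(\pi)=0$. Let $\varphi(\rho,x)$ be the solution with $\varphi(\rho,0)=1$, $\varphi'(\rho,0)=h$, with NSBF coefficients $g_n(x)$, $\gamma_n(x)$ (see context), and put $h_n:=\gamma_n(\pi)+Hg_n(\pi)$, $n\ge0$. Then $$h+H+\omega=-h_0,$$ and the characteristic function $\Phi(\rho):=\varphi'(\rho,\pi)+H\varphi(\rho,\pi)$ satisfies, for all $\rho\in\mathbb C$, $$\Phi(\rho)=-\rho\sin(\rho\pi)+h_0\left(\mathbf j_0(\rho\pi)-\cos(\rho\pi)\right)+\sum_{n=1}^\infty(-1)^nh_n\mathbf j_{2n}(\rho\pi).$$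
   Context: $\mathbf j_k$ denotes the spherical Bessel function of the first kind of order $k$; $\mathbf j_0(z)=\sin z/z$. It is known (Kravchenko–Navarro–Torba) that $\varphi(\rho,x)=\cos(\rho x)+\sum_{n=0}^\infty(-1)^ng_n(x)\mathbf j_{2n}(\rho x)$ and $\varphi'(\rho,x)=-\rho\sin(\rho x)+\left(h+\frac12\int_0^xq(t)dt\right)\cos(\rho x)+\sum_{n=0}^\infty(-1)^n\gamma_n(x)\mathbf j_{2n}(\rho x)$, with $\rho$-independent coefficients, both series converging for every $\rho\in\mathbb C$, where $g_0(x)=\varphi(0,x)-1$ and $\gamma_0(x)=g_0'(x)-h-\frac12\int_0^xq(t)dt$. *)

theory Defs
  imports "HOL-Analysis.Analysis"
begin

text \<open>Spherical Bessel function of the first kind of order k, via its power series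
  j_k(z) = 2^k z^k sum_m (-1)^m (k+m)! z^(2m) / (m! (2k+2m+1)!);  j_0(z) = sin z / z.\<close>
definition sph_bessel_j :: "nat \<Rightarrow> complex \<Rightarrow> complex" where
  "sph_bessel_j k z = (2::complex) ^ k * z ^ k *
     (\<Sum>m. (-1) ^ m * of_nat (fact (k + m)) * z ^ (2 * m)
            / (of_nat (fact m) * of_nat (fact (2 * k + 2 * m + 1))))"

text \<open>y solves -y'' + q y = lam y on [0,pi] in the Caratheodory sense: y is differentiable
  on [0,pi] with derivative y', and y' is the indefinite integral of (q - lam) y
  (so y' is absolutely continuous and y'' = (q - lam) y a.e.).\<close>
definition sl_solution :: "(real \<Rightarrow> real) \<Rightarrow> complex \<Rightarrow> (real \<Rightarrow> complex) \<Rightarrow> (real \<Rightarrow> complex) \<Rightarrow> bool" where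
  "sl_solution q lam y y' \<longleftrightarrow>
     (\<forall>x\<in>{0..pi}. (y has_vector_derivative y' x) (at x within {0..pi})) \<and>
     (\<forall>x\<in>{0..pi}. ((\<lambda>t. (complex_of_real (q t) - lam) * y t) has_integral (y' x - y' 0)) {0..x})"

definition sl_eigenvalue :: "(real \<Rightarrow> real) \<Rightarrow> real \<Rightarrow> real \<Rightarrow> complex \<Rightarrow> bool" where
  "sl_eigenvalue q h H lam \<longleftrightarrow>
     (\<exists>y y'. sl_solution q lam y y' \<and> (\<exists>x\<in>{0..pi}. y x \<noteq> 0) \<and>
             y' 0 - complex_of_real h * y 0 = 0 \<and> y' pi + complex_of_real H * y pi = 0)"

end

theory Submission imports Defs begin

lemma uniq_step:
  fixes q :: "real \<Rightarrow> real" and z z' :: "real \<Rightarrow> complex"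
  assumes sol: "sl_solution q 0 z z'"
    and qint: "(\<lambda>t. \<bar>q t\<bar>) integrable_on {0..pi}"
    and ab: "0 \<le> a" "a \<le> b" "b \<le> pi"
    and small: "integral {a..b} (\<lambda>t. \<bar>q t\<bar>) \<le> 1/2" "b - a \<le> 1"
    and za: "z a = 0" "z' a = 0"
  shows "\<forall>x\<in>{a..b}. z x = 0 \<and> z' x = 0"
proof -
  have der: "\<And>x. x \<in> {0..pi} \<Longrightarrow> (z has_vector_derivative z' x) (at x within {0..pi})"
    and int: "\<And>x. x \<in> {0..pi} \<Longrightarrow> ((\<lambda>t. (complex_of_real (q t) - 0) * z t) has_integral (z' x - z' 0)) {0..x}"
    using sol unfolding sl_solution_def by auto
  have "continuous_on {0..pi} z"
    using der by (meson continuous_on_eq_continuous_within differentiableI_vector differentiable_imp_continuous_within)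
  then have cz: "continuous_on {a..b} (\<lambda>x. norm (z x))"
    using ab by (intro continuous_intros) (auto elim: continuous_on_subset)
  obtain m where m: "m \<in> {a..b}" "\<And>x. x \<in> {a..b} \<Longrightarrow> norm (z x) \<le> norm (z m)"
    using continuous_attains_sup[OF compact_Icc _ cz] ab by auto
  define M where "M = norm (z m)"
  have M0: "M \<ge> 0" by (simp add: M_def)
  have qab: "(\<lambda>t. \<bar>q t\<bar>) integrable_on {a..b}"
    using ab by (intro integrable_subinterval_real[OF qint]) auto
  have z'b: "norm (z' x) \<le> M / 2" if x: "x \<in> {a..b}" for x
  proof -
    let ?F = "\<lambda>t. (complex_of_real (q t) - 0) * z t"
    have Fx: "(?F has_integral (z' x - z' 0)) {0..x}" using int x ab by auto
    have Fa: "(?F has_integral (z' a - z' 0)) {0..a}" using int x ab by auto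
    have "integral {0..a} ?F + integral {a..x} ?F = integral {0..x} ?F"
      by (rule Henstock_Kurzweil_Integration.integral_combine[OF _ _ has_integral_integrable[OF Fx]]) (use x ab in auto)
    then have eq: "integral {a..x} ?F = z' x"
      using Fx Fa za by (simp add: integral_unique)
    have Fint: "?F integrable_on {a..x}"
      by (rule integrable_subinterval_real[OF has_integral_integrable[OF Fx]]) (use x ab in auto)
    have qax: "(\<lambda>t. \<bar>q t\<bar>) integrable_on {a..x}"
      using x by (intro integrable_subinterval_real[OF qab]) auto
    have "norm (integral {a..x} ?F) \<le> integral {a..x} (\<lambda>t. \<bar>q t\<bar> * M)"
    proof (rule integral_norm_bound_integral[OF Fint])
      show "(\<lambda>t. \<bar>q t\<bar> * M) integrable_on {a..x}" using qax by (rule integrable_on_mult_left)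
      fix t assume t: "t \<in> {a..x}"
      have "norm (?F t) = \<bar>q t\<bar> * norm (z t)" by (simp add: norm_mult)
      also have "\<dots> \<le> \<bar>q t\<bar> * M" unfolding M_def using m(2)[of t] t x
        by (intro mult_left_mono) auto
      finally show "norm (?F t) \<le> \<bar>q t\<bar> * M" .
    qed
    also have "\<dots> = integral {a..x} (\<lambda>t. \<bar>q t\<bar>) * M" by simp
    also have "\<dots> \<le> integral {a..b} (\<lambda>t. \<bar>q t\<bar>) * M"
    proof (rule mult_right_mono[OF _ M0])
      show "integral {a..x} (\<lambda>t. \<bar>q t\<bar>) \<le> integral {a..b} (\<lambda>t. \<bar>q t\<bar>)"
        by (rule integral_subset_le[OF _ qax qab]) (use x in auto)
    qed
    also have "\<dots> \<le> 1/2 * M" using small M0 by (intro mult_right_mono) auto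
    finally show ?thesis using eq by simp
  qed
  have zb: "norm (z x) \<le> M / 2" if x: "x \<in> {a..b}" for x
  proof -
    have "norm (z x - z a) \<le> M / 2 * norm (x - a)"
    proof (rule differentiable_bound[of "{a..b}" z "\<lambda>y h. h *\<^sub>R z' y"])
      show "convex {a..b}" by simp
      fix y assume y: "y \<in> {a..b}"
      have "(z has_vector_derivative z' y) (at y within {a..b})"
        by (rule has_vector_derivative_within_subset[OF der[of y]]) (use y ab in auto)
      then show "(z has_derivative (\<lambda>h. h *\<^sub>R z' y)) (at y within {a..b})"
        by (simp add: has_vector_derivative_def)
      have "onorm (\<lambda>h::real. h *\<^sub>R z' y) = norm (z' y)"
        using onorm_scaleR_left[OF bounded_linear_ident, of "z' y"] by (simp add: onorm_id)
      then show "onorm (\<lambda>h::real. h *\<^sub>R z' y) \<le> M / 2" using z'b[OF y] by simp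
    qed (use x ab in auto)
    also have "\<dots> \<le> M / 2 * 1" using x small M0 by (intro mult_left_mono) auto
    finally show ?thesis using za by simp
  qed
  have "M \<le> M / 2" using zb[OF m(1)] by (simp add: M_def)
  then have "M = 0" using M0 by simp
  then show ?thesis
  proof (intro ballI conjI)
    fix x assume x: "x \<in> {a..b}"
    show "z x = 0" using m(2)[OF x] \<open>M = 0\<close> unfolding M_def by simp
    show "z' x = 0" using z'b[OF x] \<open>M = 0\<close> by simp
  qed
qed

lemma uniq:
  fixes q :: "real \<Rightarrow> real" and z z' :: "real \<Rightarrow> complex"
  assumes sol: "sl_solution q 0 z z'"
    and qint: "(\<lambda>t. \<bar>q t\<bar>) integrable_on {0..pi}"
    and z0: "z 0 = 0" "z' 0 = 0"
  shows "\<forall>x\<in>{0..pi}. z x = 0 \<and> z' x = 0"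
proof -
  define G where "G x = integral {0..x} (\<lambda>t. \<bar>q t\<bar>)" for x
  have "continuous_on {0..pi} G"
    unfolding G_def by (rule indefinite_integral_continuous_1[OF qint])
  then have uc: "uniformly_continuous_on {0..pi} G"
    by (rule compact_uniformly_continuous) simp
  have "\<exists>d>0. \<forall>x\<in>{0..pi}. \<forall>x'\<in>{0..pi}. dist x' x < d \<longrightarrow> dist (G x') (G x) < 1/2"
    using uc unfolding uniformly_continuous_on_def by (erule_tac x="1/2" in allE) simp
  then obtain d where d: "d > 0"
    "\<And>x x'. x \<in> {0..pi} \<Longrightarrow> x' \<in> {0..pi} \<Longrightarrow> dist x' x < d \<Longrightarrow> dist (G x') (G x) < 1/2"
    by blast
  define e where "e = min (d/2) 1"
  have e: "e > 0" "e < d" "e \<le> 1" using d(1) by (auto simp: e_def)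
  have P: "\<forall>x\<in>{0..min pi (real k * e)}. z x = 0 \<and> z' x = 0" for k
  proof (induction k)
    case 0
    then show ?case using z0 e by auto
  next
    case (Suc k)
    define s where "s = real k * e"
    have s0: "s \<ge> 0" using e by (simp add: s_def)
    have t: "real (Suc k) * e = s + e" by (simp add: s_def distrib_right)
    define a where "a = min pi s"
    define b where "b = min pi (s + e)"
    have ab: "0 \<le> a" "a \<le> b" "b \<le> pi" "b - a \<le> e"
      using e s0 pi_gt_zero unfolding a_def b_def by (auto simp: min_def)
    have za: "z a = 0" "z' a = 0" using Suc.IH ab unfolding a_def s_def by auto
    have comb: "integral {0..a} (\<lambda>t. \<bar>q t\<bar>) + integral {a..b} (\<lambda>t. \<bar>q t\<bar>) = integral {0..b} (\<lambda>t. \<bar>q t\<bar>)"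
      by (rule Henstock_Kurzweil_Integration.integral_combine[OF _ _ integrable_subinterval_real[OF qint]]) (use ab in auto)
    have "dist (G b) (G a) < 1/2" using ab e by (intro d(2)) (auto simp: dist_real_def)
    then have small: "integral {a..b} (\<lambda>t. \<bar>q t\<bar>) \<le> 1/2"
      using comb unfolding G_def dist_real_def by linarith
    have step: "\<forall>x\<in>{a..b}. z x = 0 \<and> z' x = 0"
      by (rule uniq_step[OF sol qint ab(1-3) small _ za]) (use ab e in linarith)
    show ?case
    proof
      fix x assume x: "x \<in> {0..min pi (real (Suc k) * e)}"
      then have x': "0 \<le> x" "x \<le> b" unfolding t b_def by auto
      show "z x = 0 \<and> z' x = 0"
      proof (cases "x \<le> a")
        case True then have "x \<in> {0..min pi (real k * e)}" using x' unfolding a_def s_def by auto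
        then show ?thesis using Suc.IH by blast
      next
        case False then have "x \<in> {a..b}" using x' by auto
        then show ?thesis using step by blast
      qed
    qed
  qed
  obtain k :: nat where "pi \<le> real k * e"
  proof -
    obtain k :: nat where "pi / e \<le> real k" using real_arch_simple by blast
    then have "pi \<le> real k * e" using e(1) by (simp add: pos_divide_le_eq)
    then show ?thesis using that by blast
  qed
  then have "min pi (real k * e) = pi" by (rule min_absorb1)
  then show ?thesis using P[of k] by (simp only:)
qed


lemma sbj_zero: "sph_bessel_j k 0 = (if k = 0 then 1 else 0)"
proof (cases "k = 0")
  case True
  have "(\<lambda>m. (-1) ^ m * of_nat (fact (0 + m)) * (0::complex) ^ (2 * m)
            / (of_nat (fact m) * of_nat (fact (2 * 0 + 2 * m + 1)))) = (\<lambda>m. if m = 0 then 1 else 0)"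
    by (auto simp: fun_eq_iff)
  moreover have "(\<lambda>m. if m = 0 then (1::complex) else 0) sums 1"
    using sums_single[of 0 "\<lambda>_. 1::complex"] by simp
  ultimately show ?thesis using True by (simp add: sph_bessel_j_def sums_iff)
qed (simp add: sph_bessel_j_def)

lemma sol_comb:
  assumes "sl_solution q 0 y y'" "sl_solution q 0 u u'"
  shows "sl_solution q 0 (\<lambda>x. y x - c * u x) (\<lambda>x. y' x - c * u' x)"
proof -
  have d1: "\<And>x. x \<in> {0..pi} \<Longrightarrow> (y has_vector_derivative y' x) (at x within {0..pi})"
    and i1: "\<And>x. x \<in> {0..pi} \<Longrightarrow> ((\<lambda>t. (complex_of_real (q t) - 0) * y t) has_integral (y' x - y' 0)) {0..x}"
    and d2: "\<And>x. x \<in> {0..pi} \<Longrightarrow> (u has_vector_derivative u' x) (at x within {0..pi})"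
    and i2: "\<And>x. x \<in> {0..pi} \<Longrightarrow> ((\<lambda>t. (complex_of_real (q t) - 0) * u t) has_integral (u' x - u' 0)) {0..x}"
    using assms unfolding sl_solution_def by blast+
  show ?thesis unfolding sl_solution_def
  proof (intro conjI ballI)
    fix x assume x: "x \<in> {0..pi}"
    show "((\<lambda>x. y x - c * u x) has_vector_derivative (y' x - c * u' x)) (at x within {0..pi})"
      by (intro has_vector_derivative_diff has_vector_derivative_mult_right d1 d2 x)
    have "((\<lambda>t. (complex_of_real (q t) - 0) * y t - c * ((complex_of_real (q t) - 0) * u t)) has_integral
        ((y' x - y' 0) - c * (u' x - u' 0))) {0..x}"
      by (intro has_integral_diff has_integral_mult_right i1 i2 x)
    then show "((\<lambda>t. (complex_of_real (q t) - 0) * (y t - c * u t)) has_integral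
        (y' x - c * u' x - (y' 0 - c * u' 0))) {0..x}"
      by (simp add: algebra_simps)
  qed
qed

theorem mainTheorem4:
  fixes q :: "real \<Rightarrow> real" and h H :: real
    and \<phi> \<phi>' :: "complex \<Rightarrow> real \<Rightarrow> complex"
    and g \<gamma> :: "nat \<Rightarrow> real \<Rightarrow> real"
  assumes q_meas: "q \<in> borel_measurable (lebesgue_on {0..pi})"
    and q_L2: "integrable (lebesgue_on {0..pi}) (\<lambda>t. (q t)\<^sup>2)"
    and eig0: "sl_eigenvalue q h H 0"
    and phi_sol: "\<And>\<rho>. sl_solution q (\<rho>\<^sup>2) (\<phi> \<rho>) (\<phi>' \<rho>)"
    and phi_0: "\<And>\<rho>. \<phi> \<rho> 0 = 1"
    and phi'_0: "\<And>\<rho>. \<phi>' \<rho> 0 = complex_of_real h"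
    and nsbf_phi: "\<And>\<rho> x. x \<in> {0..pi} \<Longrightarrow>
       (\<lambda>n. (-1) ^ n * complex_of_real (g n x) * sph_bessel_j (2 * n) (\<rho> * complex_of_real x))
         sums (\<phi> \<rho> x - cos (\<rho> * complex_of_real x))"
    and nsbf_phi': "\<And>\<rho> x. x \<in> {0..pi} \<Longrightarrow>
       (\<lambda>n. (-1) ^ n * complex_of_real (\<gamma> n x) * sph_bessel_j (2 * n) (\<rho> * complex_of_real x))
         sums (\<phi>' \<rho> x - (- \<rho> * sin (\<rho> * complex_of_real x)
                 + complex_of_real (h + integral {0..x} q / 2) * cos (\<rho> * complex_of_real x)))"
    and g0: "\<And>x. x \<in> {0..pi} \<Longrightarrow> g 0 x = Re (\<phi> 0 x) - 1"
    and gamma0: "\<And>x. x \<in> {0..pi} \<Longrightarrow>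
       (g 0 has_real_derivative (\<gamma> 0 x + h + integral {0..x} q / 2)) (at x within {0..pi})"
  shows "h + H + integral {0..pi} q / 2 = - (\<gamma> 0 pi + H * g 0 pi)
    \<and> (\<forall>\<rho>::complex.
        (\<lambda>n. (-1) ^ (n + 1) * complex_of_real (\<gamma> (n + 1) pi + H * g (n + 1) pi)
               * sph_bessel_j (2 * (n + 1)) (\<rho> * complex_of_real pi))
        sums (\<phi>' \<rho> pi + complex_of_real H * \<phi> \<rho> pi
              - (- \<rho> * sin (\<rho> * complex_of_real pi)
                 + complex_of_real (\<gamma> 0 pi + H * g 0 pi)
                   * (sph_bessel_j 0 (\<rho> * complex_of_real pi) - cos (\<rho> * complex_of_real pi)))))"
proof -
  define \<omega> where "\<omega> = integral {0..pi} q / 2"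
  obtain y y' where ysol: "sl_solution q 0 y y'" and ynz: "\<exists>x\<in>{0..pi}. y x \<noteq> 0"
    and yb0: "y' 0 - complex_of_real h * y 0 = 0" and ybpi: "y' pi + complex_of_real H * y pi = 0"
    using eig0 unfolding sl_eigenvalue_def by blast
  have psol: "sl_solution q 0 (\<phi> 0) (\<phi>' 0)" using phi_sol[of 0] by simp
  have "finite_measure (lebesgue_on {0..pi})" by (rule finite_measure_lebesgue_on) simp
  then have "integrable (lebesgue_on {0..pi}) q"
    using q_meas q_L2 by (rule finite_measure.square_integrable_imp_integrable)
  then have "integrable (lebesgue_on {0..pi}) (\<lambda>t. \<bar>q t\<bar>)" by (rule integrable_abs)
  then have qint: "(\<lambda>t. \<bar>q t\<bar>) integrable_on {0..pi}"
    by (rule integrable_on_lebesgue_on) simp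
  define c where "c = y 0"
  have zsol: "sl_solution q 0 (\<lambda>x. y x - c * \<phi> 0 x) (\<lambda>x. y' x - c * \<phi>' 0 x)"
    by (rule sol_comb[OF ysol psol])
  have z0: "y 0 - c * \<phi> 0 0 = 0" "y' 0 - c * \<phi>' 0 0 = 0"
    using yb0 by (simp_all add: c_def phi_0 phi'_0 mult.commute)
  have zz: "\<forall>x\<in>{0..pi}. y x - c * \<phi> 0 x = 0 \<and> y' x - c * \<phi>' 0 x = 0"
    using uniq[OF zsol qint z0] .
  have "c \<noteq> 0"
  proof
    assume "c = 0"
    then show False using zz ynz by auto
  qed
  have "y pi = c * \<phi> 0 pi" "y' pi = c * \<phi>' 0 pi" using zz by auto
  then have "c * (\<phi>' 0 pi + complex_of_real H * \<phi> 0 pi) = 0"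
    using ybpi by (simp add: algebra_simps)
  then have Phi0: "\<phi>' 0 pi + complex_of_real H * \<phi> 0 pi = 0" using \<open>c \<noteq> 0\<close> by simp
  have pi_in: "pi \<in> {0..pi}" by simp
  have ser0: "(\<lambda>n. (-1) ^ n * complex_of_real (f n) * sph_bessel_j (2 * n) (0 * complex_of_real pi))
      = (\<lambda>n. if n = 0 then complex_of_real (f 0) else 0)" for f :: "nat \<Rightarrow> real"
    by (auto simp: fun_eq_iff sbj_zero)
  have s0: "(\<lambda>n. if n = 0 then complex_of_real (f 0) else 0) sums complex_of_real (f 0)" for f :: "nat \<Rightarrow> real"
    using sums_single[of 0 "\<lambda>_. complex_of_real (f 0)"] by simp
  have e1: "\<phi> 0 pi - 1 = complex_of_real (g 0 pi)"
    using nsbf_phi[OF pi_in, of 0] unfolding ser0[of "\<lambda>n. g n pi"]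
    using sums_unique2[OF _ s0[of "\<lambda>n. g n pi"]] by simp
  have e2: "\<phi>' 0 pi - complex_of_real (h + \<omega>) = complex_of_real (\<gamma> 0 pi)"
    using nsbf_phi'[OF pi_in, of 0] unfolding ser0[of "\<lambda>n. \<gamma> n pi"] \<omega>_def
    using sums_unique2[OF _ s0[of "\<lambda>n. \<gamma> n pi"]] by simp
  have "complex_of_real (h + H + \<omega> + (\<gamma> 0 pi + H * g 0 pi)) = 0"
    using Phi0 e1 e2 by (simp add: algebra_simps)
  then have "h + H + \<omega> + (\<gamma> 0 pi + H * g 0 pi) = 0" by (simp only: of_real_eq_0_iff)
  then have part1: "h + H + \<omega> = - (\<gamma> 0 pi + H * g 0 pi)" by linarith
  then have part1c: "complex_of_real (h + \<omega>) + complex_of_real H = - complex_of_real (\<gamma> 0 pi + H * g 0 pi)"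
    by (metis add.commute add.left_commute eq_neg_iff_add_eq_0 of_real_0 of_real_add)
  show ?thesis
  proof (intro conjI allI)
    show "h + H + integral {0..pi} q / 2 = - (\<gamma> 0 pi + H * g 0 pi)" using part1 by (simp add: \<omega>_def)
    fix \<rho> :: complex
    define J where "J n = sph_bessel_j (2 * n) (\<rho> * complex_of_real pi)" for n
    define f where "f n = (-1) ^ n * complex_of_real (\<gamma> n pi) * J n
        + complex_of_real H * ((-1) ^ n * complex_of_real (g n pi) * J n)" for n
    have "f sums ((\<phi>' \<rho> pi - (- \<rho> * sin (\<rho> * complex_of_real pi)
                 + complex_of_real (h + \<omega>) * cos (\<rho> * complex_of_real pi)))
         + complex_of_real H * (\<phi> \<rho> pi - cos (\<rho> * complex_of_real pi)))"
      unfolding f_def J_def \<omega>_def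
      by (intro sums_add sums_mult nsbf_phi nsbf_phi' pi_in)
    then have A: "(\<lambda>n. f (Suc n)) sums ((\<phi>' \<rho> pi - (- \<rho> * sin (\<rho> * complex_of_real pi)
                 + complex_of_real (h + \<omega>) * cos (\<rho> * complex_of_real pi)))
         + complex_of_real H * (\<phi> \<rho> pi - cos (\<rho> * complex_of_real pi)) - f 0)"
      by (simp add: sums_Suc_iff)
    have B: "(\<lambda>n. f (Suc n)) = (\<lambda>n. (-1) ^ (n + 1) * complex_of_real (\<gamma> (n + 1) pi + H * g (n + 1) pi)
               * sph_bessel_j (2 * (n + 1)) (\<rho> * complex_of_real pi))"
      by (simp add: fun_eq_iff f_def J_def algebra_simps)
    have C: "(\<phi>' \<rho> pi - (- \<rho> * sin (\<rho> * complex_of_real pi)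
                 + complex_of_real (h + \<omega>) * cos (\<rho> * complex_of_real pi)))
         + complex_of_real H * (\<phi> \<rho> pi - cos (\<rho> * complex_of_real pi)) - f 0
       = \<phi>' \<rho> pi + complex_of_real H * \<phi> \<rho> pi
              - (- \<rho> * sin (\<rho> * complex_of_real pi)
                 + complex_of_real (\<gamma> 0 pi + H * g 0 pi)
                   * (sph_bessel_j 0 (\<rho> * complex_of_real pi) - cos (\<rho> * complex_of_real pi)))"
    proof -
      have "complex_of_real (h + \<omega>) + complex_of_real H + complex_of_real (\<gamma> 0 pi + H * g 0 pi) = 0"
        using part1c by simp
      then have "(complex_of_real (h + \<omega>) + complex_of_real H + complex_of_real (\<gamma> 0 pi + H * g 0 pi)) * cos (\<rho> * complex_of_real pi) = 0"
        by simp
      then have "complex_of_real (h + \<omega>) * cos (\<rho> * complex_of_real pi) + complex_of_real H * cos (\<rho> * complex_of_real pi)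
         + complex_of_real (\<gamma> 0 pi + H * g 0 pi) * cos (\<rho> * complex_of_real pi) = 0"
        by (metis distrib_right)
      then show ?thesis unfolding f_def J_def by (simp add: algebra_simps)
    qed
    show "(\<lambda>n. (-1) ^ (n + 1) * complex_of_real (\<gamma> (n + 1) pi + H * g (n + 1) pi)
               * sph_bessel_j (2 * (n + 1)) (\<rho> * complex_of_real pi))
        sums (\<phi>' \<rho> pi + complex_of_real H * \<phi> \<rho> pi
              - (- \<rho> * sin (\<rho> * complex_of_real pi)
                 + complex_of_real (\<gamma> 0 pi + H * g 0 pi)
                   * (sph_bessel_j 0 (\<rho> * complex_of_real pi) - cos (\<rho> * complex_of_real pi))))"
      using A unfolding B C .
  qed
qed

end
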